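(* Let $n\ge2$, $d\ge1$ with $\gcd(n,d)=1$, and let $\ell,\ell'\in\mathrm{Dyck}_{d,n}$. Then for every $2\le i\le n+d$ the relation $\bar\ell\,R\,r^i(\bar{\ell'})$ does not hold (in $L_{d+1,n}$).
   Context: $L_{a,b}$ is the set of lattice paths from $(0,0)$ to $(a,b)$ made of unit horizontal $(1,0)$ and vertical $(0,1)$ steps. $\mathrm{Dyck}_{d,n}$ is the set of $\ell\in L_{d,n}$ all of whose lattice points $(x,y)$ satisfy $y\le\frac nd x$. For $\ell\in L_{d,n}$, $\bar\ell\in L_{d+1,n}$ is obtained by adding a horizontal step at the beginning. For $p\in L_{d+1,n}$, $r(p)$ is obtained by moving the first step of $p$ to the end. For $p_1,p_2\in L_{d+1,n}$: $p_1\le p_2$ means $p_1$ lies weakly below $p_2$; $Y_p$ is the region of the $(d+1)\times n$ rectangle between $p$ and the right and bottom sides; $p_1\,R\,p_2$ iff $p_1\le p_2$ and no lattice-aligned rectangle of width $2$ and height $1$ fits inside $Y_{p_2}\setminus Y_{p_1}$. *)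

theory Defs
  imports Complex_Main
begin

text \<open>A lattice path is a list of steps: True = horizontal unit step (1,0),
  False = vertical unit step (0,1).\<close>

type_synonym path = "bool list"

definition lpath :: "nat \<Rightarrow> nat \<Rightarrow> path set" where
  "lpath a b = {p. length (filter id p) = a \<and> length (filter Not p) = b}"

definition lpoint :: "path \<Rightarrow> nat \<Rightarrow> nat \<times> nat" where
  "lpoint p i = (length (filter id (take i p)), length (filter Not (take i p)))"

definition lpoints :: "path \<Rightarrow> (nat \<times> nat) set" where
  "lpoints p = {lpoint p i | i. i \<le> length p}"

definition dyck :: "nat \<Rightarrow> nat \<Rightarrow> path set" where
  "dyck d n = {l \<in> lpath d n. \<forall>(x, y) \<in> lpoints l. real y \<le> real n / real d * real x}"

definition pbar :: "path \<Rightarrow> path" where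
  "pbar l = True # l"

definition rot :: "path \<Rightarrow> path" where
  "rot p = tl p @ [hd p]"

definition path_below :: "path \<Rightarrow> path \<Rightarrow> bool" where
  "path_below p1 p2 \<longleftrightarrow> (\<forall>(x, y) \<in> lpoints p1. \<exists>y'. (x, y') \<in> lpoints p2 \<and> y \<le> y')"

text \<open>Y_p as a set of unit cells: cell (k,j) is the square [k,k+1]\<times>[j,j+1];
  it lies below p (between p and the bottom/right sides) iff the horizontal step of p
  in column k occurs at height > j.\<close>
definition ycells :: "path \<Rightarrow> (nat \<times> nat) set" where
  "ycells p = {(k, j). \<exists>i < length p. p ! i \<and> fst (lpoint p i) = k \<and> j < snd (lpoint p i)}"

definition relR :: "path \<Rightarrow> path \<Rightarrow> bool" where
  "relR p1 p2 \<longleftrightarrow> path_below p1 p2 \<and>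
     \<not> (\<exists>k j. (k, j) \<in> ycells p2 - ycells p1 \<and> (Suc k, j) \<in> ycells p2 - ycells p1)"

end

theory Submission
  imports Defs
begin

lemma rot_pow: "p \<noteq> [] \<Longrightarrow> i \<le> length p \<Longrightarrow> (rot ^^ i) p = drop i p @ take i p"
proof (induction i)
  case 0 then show ?case by simp
next
  case (Suc i)
  then have IH: "(rot ^^ i) p = drop i p @ take i p" by simp
  have lt: "i < length p" using Suc by simp
  have "drop i p = p ! i # drop (Suc i) p" using lt by (simp add: Cons_nth_drop_Suc)
  have "(rot ^^ Suc i) p = rot ((rot ^^ i) p)" by simp
  also have "\<dots> = drop (Suc i) p @ take (Suc i) p"
    using IH lt \<open>drop i p = _\<close> by (simp add: rot_def take_Suc_conv_app_nth)
  finally show ?case .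
qed

lemma dyck_pt:
  assumes "l \<in> dyck d n" "d \<ge> 1" "q \<le> length l"
  shows "d * snd (lpoint l q) \<le> n * fst (lpoint l q)"
proof -
  obtain a b where ab: "lpoint l q = (a, b)" by force
  have "(a, b) \<in> lpoints l" using assms(3) ab unfolding lpoints_def by force
  then have "real b \<le> real n / real d * real a" using assms(1) unfolding dyck_def by blast
  then have "real d * real b \<le> real n * real a" using assms(2)
    by (simp add: field_simps)
  then have "d * b \<le> n * a" by (metis of_nat_le_iff of_nat_mult)
  then show ?thesis using ab by simp
qed

lemma ycells_p1:
  assumes "l \<in> dyck d n" "d \<ge> 1" "(c, j) \<in> ycells (True # l)"
  shows "1 \<le> c \<and> d * (j + 1) \<le> n * (c - 1)"
proof -
  obtain i' where i': "i' < length (True # l)" "(True # l) ! i'"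
    "fst (lpoint (True # l) i') = c" "j < snd (lpoint (True # l) i')"
    using assms(3) unfolding ycells_def by blast
  show ?thesis
  proof (cases i')
    case 0
    then show ?thesis using i' by (simp add: lpoint_def)
  next
    case (Suc q)
    have lp: "lpoint (True # l) i' = (Suc (fst (lpoint l q)), snd (lpoint l q))"
      using Suc by (simp add: lpoint_def)
    have "q \<le> length l" using i' Suc by simp
    then have "d * snd (lpoint l q) \<le> n * fst (lpoint l q)" using dyck_pt assms by blast
    moreover have "j + 1 \<le> snd (lpoint l q)" using i'(4) lp by simp
    ultimately have "d * (j+1) \<le> n * fst (lpoint l q)"
      by (meson le_trans mult_le_mono2)
    then show ?thesis using i'(3) lp by auto
  qed
qed

lemma ycellsI:
  assumes "i < length p" "p ! i" "lpoint p i = (k, h)" "j < h"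
  shows "(k, j) \<in> ycells p"
  unfolding ycells_def using assms by (auto intro!: exI[of _ i])

theorem proposition4p18:
  fixes n d :: nat and l l' :: path
  assumes "n \<ge> 2" "d \<ge> 1" "coprime n d"
    and "l \<in> dyck d n" "l' \<in> dyck d n"
  shows "\<forall>i. 2 \<le> i \<and> i \<le> n + d \<longrightarrow> \<not> relR (pbar l) ((rot ^^ i) (pbar l'))"
proof (intro allI impI notI)
  fix i assume ir: "2 \<le> i \<and> i \<le> n + d" and R: "relR (pbar l) ((rot ^^ i) (pbar l'))"
  have lp': "length (filter id l') = d" "length (filter Not l') = n"
    using assms(5) unfolding dyck_def lpath_def by auto
  have len: "length l' = n + d"
    using sum_length_filter_compl[of id l'] lp' by (simp add: comp_def)
  define w where "w = take (i-1) l'"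
  define u where "u = drop (i-1) l'"
  have wu: "w @ u = l'" unfolding w_def u_def by simp
  have p2: "(rot ^^ i) (pbar l') = u @ True # w"
  proof -
    have "(rot ^^ i) (pbar l') = drop i (True # l') @ take i (True # l')"
      using rot_pow[of "True # l'" i] ir len by (simp add: pbar_def)
    also have "\<dots> = u @ True # w" using ir unfolding u_def w_def
      by (cases i) auto
    finally show ?thesis .
  qed
  define x where "x = length (filter id u)"
  define y where "y = length (filter Not u)"
  define x1 where "x1 = length (filter id w)"
  define y1 where "y1 = length (filter Not w)"
  have s1: "x1 + x = d" using lp' wu unfolding x_def x1_def by (metis filter_append length_append)
  have s2: "y1 + y = n" using lp' wu unfolding y_def y1_def by (metis filter_append length_append)
  have lw: "length w = i - 1" using ir len unfolding w_def by (simp add: min_def, linarith)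
  have lxy: "x1 + y1 = i - 1"
    using sum_length_filter_compl[of id w] lw unfolding x1_def y1_def by (simp add: comp_def)
  have "lpoint l' (i-1) = (x1, y1)" unfolding lpoint_def x1_def y1_def w_def by simp
  then have le: "d * y1 \<le> n * x1" using dyck_pt[OF assms(5) assms(2), of "i-1"] len ir by fastforce
  have strict: "d * y1 < n * x1"
  proof (rule ccontr)
    assume "\<not> d * y1 < n * x1"
    then have eq: "d * y1 = n * x1" using le by simp
    then have "d dvd n * x1" by (metis dvd_triv_left)
    then have "d dvd x1" using assms(3) by (metis coprime_commute coprime_dvd_mult_right_iff)
    moreover have "x1 \<le> d" using s1 by simp
    ultimately have "x1 = 0 \<or> x1 = d"
      by (metis dvd_imp_le le_antisym neq0_conv)
    then show False
    proof
      assume "x1 = 0"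
      then have "y1 = 0" using eq assms(2) by simp
      then show False using lxy \<open>x1 = 0\<close> ir by simp
    next
      assume "x1 = d"
      then have "y1 = n" using eq assms(2) by (metis mult.commute mult_cancel_left not_one_le_zero)
      then show False using lxy \<open>x1 = d\<close> ir by linarith
    qed
  qed
  have wt: "n * x < d * y"
  proof -
    have "n * x + n * x1 = n * d" using s1 by (metis add.commute add_mult_distrib2)
    moreover have "d * y + d * y1 = d * n" using s2 by (metis add.commute add_mult_distrib2)
    ultimately show ?thesis using strict by (simp add: mult.commute)
  qed
  have ypos: "y \<ge> 1" using wt by (cases y) auto
  have x1pos: "x1 > 0" using strict by (cases x1) auto
  then have "True \<in> set w" unfolding x1_def by (metis filter_True id_apply length_0_conv less_irrefl_nat list.size(3) filter_empty_conv)
  define t where "t = length (takeWhile Not w)"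
  have tw: "t < length w" unfolding t_def
  proof (rule ccontr)
    assume "\<not> length (takeWhile Not w) < length w"
    then have "takeWhile Not w = w" using length_takeWhile_le[of Not w]
      by (metis le_antisym not_less takeWhile_eq_take take_all)
    then show False using \<open>True \<in> set w\<close> by (metis set_takeWhileD)
  qed
  have wt_t: "w ! t" unfolding t_def using tw t_def nth_length_takeWhile by fastforce
  have tk: "take t w = takeWhile Not w" unfolding t_def by (metis takeWhile_eq_take)
  have f1: "filter id (take t w) = []" unfolding tk
    by (metis (full_types) filter_False id_apply set_takeWhileD)
  have f2: "filter Not (take t w) = take t w" unfolding tk
    by (metis filter_True set_takeWhileD)
  let ?p2 = "u @ True # w"
  have c1: "(x, y - 1) \<in> ycells ?p2"
  proof -
    have "lpoint ?p2 (length u) = (x, y)" unfolding lpoint_def x_def y_def by simp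
    moreover have "?p2 ! length u" by simp
    moreover have "length u < length ?p2" by simp
    ultimately show ?thesis using ypos ycellsI by (metis diff_less zero_less_one less_le_trans)
  qed
  have c2: "(Suc x, y - 1) \<in> ycells ?p2"
  proof -
    have tk2: "take (length u + Suc t) ?p2 = u @ True # take t w" by simp
    have "lpoint ?p2 (length u + Suc t) = (Suc x, y + t)"
      unfolding lpoint_def tk2 x_def y_def using f1 f2 tw by simp
    moreover have "?p2 ! (length u + Suc t) = w ! t" by (simp add: nth_append)
    moreover have "length u + Suc t < length ?p2" using tw by simp
    moreover have "y - 1 < y + t" using ypos by simp
    ultimately show ?thesis using wt_t ycellsI by metis
  qed
  have n1: "(x, y - 1) \<notin> ycells (pbar l)"
  proof
    assume "(x, y - 1) \<in> ycells (pbar l)"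
    then have "1 \<le> x \<and> d * (y - 1 + 1) \<le> n * (x - 1)" using ycells_p1 assms unfolding pbar_def by blast
    then have "d * y \<le> n * x" using ypos by (metis diff_le_self le_add_diff_inverse2 le_trans mult_le_mono2)
    then show False using wt by simp
  qed
  have n2: "(Suc x, y - 1) \<notin> ycells (pbar l)"
  proof
    assume "(Suc x, y - 1) \<in> ycells (pbar l)"
    then have "d * (y - 1 + 1) \<le> n * (Suc x - 1)" using ycells_p1 assms unfolding pbar_def by blast
    then show False using wt ypos by simp
  qed
  show False using R c1 c2 n1 n2 p2 unfolding relR_def by auto
qed

end
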